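(* Let $h:\mathbb{R}^p\times[t_0,t_f)\to\mathbb{R}$ be a CBF for the first-order system $\dot{\mathbf{p}}=\mathbf{f}(\mathbf{p})+\mathbf{G}(\mathbf{p})\mathbf{z}$ on a set-valued flow $\mathcal{D}:[t_0,t_f)\rightrightarrows\mathbb{R}^p$, and let $\mathbf{k}:\mathbb{R}^p\times[t_0,t_f)\to\mathbb{R}^z$ be continuously differentiable with $\dot h(\mathbf{p},t,\mathbf{k}(\mathbf{p},t))>-\alpha(h(\mathbf{p},t))$ for all $(\mathbf{p},t)\in\mathcal{G}(\mathcal{D})$, where $\alpha$ is an extended class-$\mathcal{K}_\infty$ function. For $\sigma>0$ define $h_1:\mathbb{R}^p\times\mathbb{R}^z\times[t_0,t_f)\to\mathbb{R}$ by $h_1(\mathbf{p},\mathbf{z},t)=h(\mathbf{p},t)-\frac{1}{2\sigma}\|\mathbf{z}-\mathbf{k}(\mathbf{p},t)\|^2$. Then $h_1$ is a CBF for the second-order system $\dot{\mathbf{p}}=\mathbf{f}(\mathbf{p})+\mathbf{G}(\mathbf{p})\mathbf{z}$, $\dot{\mathbf{z}}=\mathbf{f}_1(\mathbf{p},\mathbf{z})+\mathbf{G}_1(\mathbf{p},\mathbf{z})\mathbf{u}$, with any associated extended class-$\mathcal{K}_\infty$ function $\alpha_1$ satisfying $\alpha_1(s)\ge\alpha(s)$ for all $s\in\mathbb{R}$.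
   Context: First-order model: $\dot{\mathbf{p}}=\mathbf{f}(\mathbf{p})+\mathbf{G}(\mathbf{p})\mathbf{z}$, $\mathbf{p}\in\mathbb{R}^p$, $\mathbf{z}\in\mathbb{R}^z$, $\mathbf{f},\mathbf{G}$ locally Lipschitz, $\mathbf{G}(\mathbf{p})$ full row rank for all $\mathbf{p}$. Second-order strict-feedback model: state $(\mathbf{p},\mathbf{z})$, input $\mathbf{u}\in\mathbb{R}^m$, with additionally $\mathbf{f}_1:\mathbb{R}^p\times\mathbb{R}^z\to\mathbb{R}^z$, $\mathbf{G}_1:\mathbb{R}^p\times\mathbb{R}^z\to\mathbb{R}^{z\times m}$ locally Lipschitz and $\mathbf{G}_1(\mathbf{p},\mathbf{z})$ of full row rank for all $(\mathbf{p},\mathbf{z})$. A continuous $\alpha:\mathbb{R}\to\mathbb{R}$ is extended class-$\mathcal{K}_\infty$ if strictly increasing, $\alpha(0)=0$, $\lim_{s\to\pm\infty}\alpha(s)=\pm\infty$. Graph of a set-valued flow $\mathcal{D}$: $\mathcal{G}(\mathcal{D})=\{(\mathbf{x},t):\mathbf{x}\in\mathcal{D}(t)\}$. CBF definition (for a control-affine system $\dot{\mathbf{x}}=\mathbf{F}(\mathbf{x})+\mathbf{B}(\mathbf{x})\mathbf{v}$ with state $\mathbf{x}\in\mathbb{R}^n$, input $\mathbf{v}$): a continuously differentiable $h:\mathbb{R}^n\times[t_0,t_f)\to\mathbb{R}$ with $\frac{\partial}{\partial\mathbf{x}}h\ne\mathbf{0}$ whenever $h=0$, and $\mathcal{C}(t)=\{\mathbf{x}:h(\mathbf{x},t)\ge0\}$,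 is a CBF on the set-valued flow $\mathcal{D}$ (with $\mathcal{C}(t)\subseteq\mathcal{D}(t)$ for all $t$) with associated extended class-$\mathcal{K}_\infty$ function $\alpha$ if for all $(\mathbf{x},t)\in\mathcal{G}(\mathcal{D})$, $\sup_{\mathbf{v}}\dot h(\mathbf{x},t,\mathbf{v})>-\alpha(h(\mathbf{x},t))$, where $\dot h(\mathbf{x},t,\mathbf{v})=\frac{\partial h}{\partial\mathbf{x}}(\mathbf{F}(\mathbf{x})+\mathbf{B}(\mathbf{x})\mathbf{v})+\frac{\partial h}{\partial t}$. For the first-order model, $\dot h(\mathbf{p},t,\mathbf{z})=\frac{\partial h}{\partial\mathbf{p}}(\mathbf{f}(\mathbf{p})+\mathbf{G}(\mathbf{p})\mathbf{z})+\frac{\partial h}{\partial t}$; "CBF for the second-order system" means this definition with $\mathbf{x}=(\mathbf{p},\mathbf{z})$ and input $\mathbf{u}$ (existence of some suitable flow $\mathcal{D}_1$). *)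

theory Defs
  imports "HOL-Analysis.Analysis"
begin

definition time_dom :: "real \<Rightarrow> ereal \<Rightarrow> real set" where
  "time_dom t0 tf = {t. t0 \<le> t \<and> ereal t < tf}"

definition loc_lipschitz :: "('a::metric_space \<Rightarrow> 'b::metric_space) \<Rightarrow> bool" where
  "loc_lipschitz f \<longleftrightarrow> (\<forall>x. \<exists>e>0. \<exists>L. L-lipschitz_on (ball x e) f)"

definition ext_class_Kinf :: "(real \<Rightarrow> real) \<Rightarrow> bool" where
  "ext_class_Kinf \<alpha> \<longleftrightarrow> continuous_on UNIV \<alpha> \<and> strict_mono \<alpha> \<and> \<alpha> 0 = 0 \<and>
     filterlim \<alpha> at_top at_top \<and> filterlim \<alpha> at_bot at_bot"

definition C1_on :: "'a::real_normed_vector set \<Rightarrow> ('a \<Rightarrow> 'b::real_normed_vector) \<Rightarrow> bool" where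
  "C1_on S g \<longleftrightarrow> (\<exists>Dg. continuous_on S Dg \<and>
      (\<forall>y\<in>S. (g has_derivative blinfun_apply (Dg y)) (at y within S)))"

definition flow_graph :: "real set \<Rightarrow> (real \<Rightarrow> 'x set) \<Rightarrow> ('x \<times> real) set" where
  "flow_graph T D = {(x, t). t \<in> T \<and> x \<in> D t}"

text \<open>Time derivative of h along the control-affine system xdot = F x + B x v, where
  Dh (x,t) is the (Frechet) derivative of h at (x,t); Dh (x,t) (w, 1) = dh/dx w + dh/dt.\<close>
definition hdot :: "('x::real_normed_vector \<times> real \<Rightarrow> ('x \<times> real) \<Rightarrow>\<^sub>L real) \<Rightarrow>
     ('x \<Rightarrow> 'x) \<Rightarrow> ('x \<Rightarrow> 'v \<Rightarrow> 'x) \<Rightarrow> 'x \<Rightarrow> real \<Rightarrow> 'v \<Rightarrow> real" where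
  "hdot Dh F B x t v = blinfun_apply (Dh (x, t)) (F x + B x v, 1)"

definition cbf_wrt ::
  "('x::real_normed_vector \<Rightarrow> 'x) \<Rightarrow> ('x \<Rightarrow> 'v \<Rightarrow> 'x) \<Rightarrow> real \<Rightarrow> ereal \<Rightarrow>
   ('x \<times> real \<Rightarrow> real) \<Rightarrow> ('x \<times> real \<Rightarrow> ('x \<times> real) \<Rightarrow>\<^sub>L real) \<Rightarrow>
   (real \<Rightarrow> 'x set) \<Rightarrow> (real \<Rightarrow> real) \<Rightarrow> bool" where
  "cbf_wrt F B t0 tf h Dh D \<alpha> \<longleftrightarrow>
     continuous_on (UNIV \<times> time_dom t0 tf) Dh \<and>
     (\<forall>y \<in> UNIV \<times> time_dom t0 tf.
        (h has_derivative blinfun_apply (Dh y)) (at y within (UNIV \<times> time_dom t0 tf))) \<and>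
     (\<forall>x. \<forall>t \<in> time_dom t0 tf. h (x, t) = 0 \<longrightarrow>
        (\<exists>w. blinfun_apply (Dh (x, t)) (w, 0) \<noteq> 0)) \<and>
     (\<forall>t \<in> time_dom t0 tf. {x. h (x, t) \<ge> 0} \<subseteq> D t) \<and>
     (\<forall>(x, t) \<in> flow_graph (time_dom t0 tf) D.
        (\<exists>v. hdot Dh F B x t v > - \<alpha> (h (x, t))))"

definition cbf ::
  "('x::real_normed_vector \<Rightarrow> 'x) \<Rightarrow> ('x \<Rightarrow> 'v \<Rightarrow> 'x) \<Rightarrow> real \<Rightarrow> ereal \<Rightarrow>
   ('x \<times> real \<Rightarrow> real) \<Rightarrow> (real \<Rightarrow> 'x set) \<Rightarrow> (real \<Rightarrow> real) \<Rightarrow> bool" where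
  "cbf F B t0 tf h D \<alpha> \<longleftrightarrow> (\<exists>Dh. cbf_wrt F B t0 tf h Dh D \<alpha>)"

end

theory Submission
  imports Defs
begin

theorem mainTheorem2:
  fixes f :: "real^'p \<Rightarrow> real^'p" and G :: "real^'p \<Rightarrow> real^'z^'p"
    and f1 :: "real^'p \<Rightarrow> real^'z \<Rightarrow> real^'z" and G1 :: "real^'p \<Rightarrow> real^'z \<Rightarrow> real^'m^'z"
    and t0 :: real and tf :: ereal
    and h :: "(real^'p) \<times> real \<Rightarrow> real"
    and Dh :: "(real^'p) \<times> real \<Rightarrow> ((real^'p) \<times> real) \<Rightarrow>\<^sub>L real"
    and D :: "real \<Rightarrow> (real^'p) set"
    and k :: "(real^'p) \<times> real \<Rightarrow> real^'z"
    and \<alpha> \<alpha>1 :: "real \<Rightarrow> real" and \<sigma> :: real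
  assumes f_lip: "loc_lipschitz f" and G_lip: "loc_lipschitz G"
    and G_rank: "\<forall>p. rank (G p) = CARD('p)"
    and f1_lip: "loc_lipschitz (\<lambda>(p, z). f1 p z)" and G1_lip: "loc_lipschitz (\<lambda>(p, z). G1 p z)"
    and G1_rank: "\<forall>p z. rank (G1 p z) = CARD('z)"
    and \<alpha>_K: "ext_class_Kinf \<alpha>"
    and h_cbf: "cbf_wrt f (\<lambda>p z. G p *v z) t0 tf h Dh D \<alpha>"
    and k_C1: "C1_on (UNIV \<times> time_dom t0 tf) k"
    and k_safe: "\<forall>(p, t) \<in> flow_graph (time_dom t0 tf) D.
                   hdot Dh f (\<lambda>p z. G p *v z) p t (k (p, t)) > - \<alpha> (h (p, t))"
    and \<sigma>_pos: "\<sigma> > 0"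
    and \<alpha>1_K: "ext_class_Kinf \<alpha>1" and \<alpha>1_ge: "\<forall>s. \<alpha>1 s \<ge> \<alpha> s"
  shows "\<exists>D1. cbf (\<lambda>(p, z). (f p + G p *v z, f1 p z)) (\<lambda>(p, z) u. (0, G1 p z *v u)) t0 tf
                 (\<lambda>((p, z), t). h (p, t) - 1 / (2 * \<sigma>) * (norm (z - k (p, t)))\<^sup>2) D1 \<alpha>1"
proof -
  define T where "T = time_dom t0 tf"
  define S :: "(((real^'p) \<times> (real^'z)) \<times> real) set" where "S = UNIV \<times> T"
  define pr :: "(((real^'p) \<times> (real^'z)) \<times> real) \<Rightarrow> ((real^'p) \<times> real)" where "pr = (\<lambda>y. (fst (fst y), snd y))"
  define zz :: "(((real^'p) \<times> (real^'z)) \<times> real) \<Rightarrow> real^'z" where "zz = (\<lambda>y. snd (fst y))"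
  have pr_lin: "bounded_linear pr" unfolding pr_def
    by (intro bounded_linear_Pair bounded_linear_compose[OF bounded_linear_fst] bounded_linear_fst bounded_linear_snd)
  have zz_lin: "bounded_linear zz" unfolding zz_def
    by (intro bounded_linear_compose[OF bounded_linear_snd] bounded_linear_fst)
  define P where "P = Blinfun pr"
  define Q where "Q = Blinfun zz"
  have P_app[simp]: "blinfun_apply P = pr" unfolding P_def using pr_lin by (simp add: bounded_linear_Blinfun_apply)
  have Q_app[simp]: "blinfun_apply Q = zz" unfolding Q_def using zz_lin by (simp add: bounded_linear_Blinfun_apply)
  have prS: "pr ` S \<subseteq> UNIV \<times> T" unfolding S_def pr_def by auto
  from k_C1 obtain Dk where Dk_cont: "continuous_on (UNIV \<times> T) Dk"
    and Dk_der: "\<And>y. y \<in> UNIV \<times> T \<Longrightarrow> (k has_derivative blinfun_apply (Dk y)) (at y within UNIV \<times> T)"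
    unfolding C1_on_def T_def by blast
  from h_cbf have Dh_cont: "continuous_on (UNIV \<times> T) Dh"
    and Dh_der: "\<And>y. y \<in> UNIV \<times> T \<Longrightarrow> (h has_derivative blinfun_apply (Dh y)) (at y within UNIV \<times> T)"
    and Dh_nd: "\<And>x t. t \<in> T \<Longrightarrow> h (x, t) = 0 \<Longrightarrow> \<exists>w. blinfun_apply (Dh (x, t)) (w, 0) \<noteq> 0"
    and D_sup: "\<And>t. t \<in> T \<Longrightarrow> {x. h (x, t) \<ge> 0} \<subseteq> D t"
    unfolding cbf_wrt_def T_def by blast+
  define Dh1 where "Dh1 = (\<lambda>y. (Dh (pr y) o\<^sub>L P) - ((1/\<sigma>) *\<^sub>R (blinfun_inner_left (zz y - k (pr y)) o\<^sub>L (Q - (Dk (pr y) o\<^sub>L P)))))"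
  have Dh1_app: "blinfun_apply (Dh1 y) w = blinfun_apply (Dh (pr y)) (pr w) - (1/\<sigma>) * ((zz w - blinfun_apply (Dk (pr y)) (pr w)) \<bullet> (zz y - k (pr y)))" for y w
    unfolding Dh1_def by (simp add: blinfun.diff_left blinfun.diff_right blinfun.scaleR_left inner_diff_left)
  define h1 :: "(((real^'p) \<times> (real^'z)) \<times> real) \<Rightarrow> real" where "h1 = (\<lambda>((p, z), t). h (p, t) - 1 / (2 * \<sigma>) * (norm (z - k (p, t)))\<^sup>2)"
  have h1_alt: "h1 y = h (pr y) - 1 / (2 * \<sigma>) * ((zz y - k (pr y)) \<bullet> (zz y - k (pr y)))" for y
    unfolding h1_def pr_def zz_def by (auto simp: case_prod_beta power2_norm_eq_inner)
  define D1 :: "real \<Rightarrow> ((real^'p) \<times> (real^'z)) set" where "D1 = (\<lambda>t. {x. fst x \<in> D t})"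
  have "cbf_wrt (\<lambda>(p, z). (f p + G p *v z, f1 p z)) (\<lambda>(p, z) u. (0, G1 p z *v u)) t0 tf h1 Dh1 D1 \<alpha>1"
    unfolding cbf_wrt_def T_def[symmetric] S_def[symmetric]
  proof (intro conjI)
    show "continuous_on S Dh1"
    proof -
      have pr_cont: "continuous_on S pr" using pr_lin linear_continuous_on by blast
      have zz_cont: "continuous_on S zz" using zz_lin linear_continuous_on by blast
      have c1: "continuous_on S (\<lambda>y. Dh (pr y))" by (rule continuous_on_compose2[OF Dh_cont pr_cont prS])
      have c2: "continuous_on S (\<lambda>y. Dk (pr y))" by (rule continuous_on_compose2[OF Dk_cont pr_cont prS])
      have kc: "continuous_on (UNIV \<times> T) k"
        unfolding continuous_on_eq_continuous_within using Dk_der has_derivative_continuous by blast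
      have c3: "continuous_on S (\<lambda>y. k (pr y))" by (rule continuous_on_compose2[OF kc pr_cont prS])
      show ?thesis unfolding Dh1_def by (intro continuous_intros c1 c2 c3 zz_cont)
    qed
    show "\<forall>y\<in>S. (h1 has_derivative blinfun_apply (Dh1 y)) (at y within S)"
    proof
      fix y assume yS: "y \<in> S"
      have pry: "pr y \<in> UNIV \<times> T" using yS prS by blast
      have pr_der: "(pr has_derivative pr) (at y within S)" using pr_lin bounded_linear_imp_has_derivative by blast
      have zz_der: "(zz has_derivative zz) (at y within S)" using zz_lin bounded_linear_imp_has_derivative by blast
      have hder: "((\<lambda>y. h (pr y)) has_derivative (\<lambda>w. blinfun_apply (Dh (pr y)) (pr w))) (at y within S)"
        using diff_chain_within[OF pr_der has_derivative_subset[OF Dh_der[OF pry] prS]] by (simp add: o_def)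
      have kder: "((\<lambda>y. k (pr y)) has_derivative (\<lambda>w. blinfun_apply (Dk (pr y)) (pr w))) (at y within S)"
        using diff_chain_within[OF pr_der has_derivative_subset[OF Dk_der[OF pry] prS]] by (simp add: o_def)
      have gder: "((\<lambda>y. zz y - k (pr y)) has_derivative (\<lambda>w. zz w - blinfun_apply (Dk (pr y)) (pr w))) (at y within S)"
        by (rule has_derivative_diff[OF zz_der kder])
      have ider: "((\<lambda>y. (zz y - k (pr y)) \<bullet> (zz y - k (pr y))) has_derivative
          (\<lambda>w. (zz y - k (pr y)) \<bullet> (zz w - blinfun_apply (Dk (pr y)) (pr w)) + (zz w - blinfun_apply (Dk (pr y)) (pr w)) \<bullet> (zz y - k (pr y)))) (at y within S)"
        by (rule has_derivative_inner[OF gder gder])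
      have h1eq: "h1 = (\<lambda>y. h (pr y) - 1 / (2 * \<sigma>) * ((zz y - k (pr y)) \<bullet> (zz y - k (pr y))))"
        using h1_alt by (simp add: fun_eq_iff)
      show "(h1 has_derivative blinfun_apply (Dh1 y)) (at y within S)"
        unfolding h1eq
        by (rule has_derivative_eq_rhs, (rule derivative_intros hder ider)+)
          (simp add: fun_eq_iff Dh1_app inner_commute)
    qed
    show "\<forall>x. \<forall>t\<in>T. h1 (x, t) = 0 \<longrightarrow> (\<exists>w. blinfun_apply (Dh1 (x, t)) (w, 0) \<noteq> 0)"
    proof (intro allI ballI impI)
      fix x t assume tT: "t \<in> T" and h10: "h1 (x, t) = 0"
      obtain p z where x: "x = (p, z)" by fastforce
      show "\<exists>w. blinfun_apply (Dh1 (x, t)) (w, 0) \<noteq> 0"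
      proof (cases "z - k (p, t) = 0")
        case True
        then have "h (p, t) = 0" using h10 h1_alt[of "(x, t)"] by (simp add: x pr_def zz_def)
        then obtain a where a: "blinfun_apply (Dh (p, t)) (a, 0) \<noteq> 0" using Dh_nd tT by blast
        show ?thesis
          by (rule exI[of _ "(a, 0)"]) (use a True in \<open>simp add: Dh1_app x pr_def zz_def\<close>)
      next
        case False
        have "blinfun_apply (Dh1 (x, t)) ((0, z - k (p, t)), 0) = - (1/\<sigma>) * ((z - k (p, t)) \<bullet> (z - k (p, t)))"
          by (simp add: Dh1_app x pr_def zz_def zero_prod_def[symmetric] blinfun.zero_right)
        also have "\<dots> \<noteq> 0" using False \<sigma>_pos by simp
        finally show ?thesis by blast
      qed
    qed
    show "\<forall>t\<in>T. {x. 0 \<le> h1 (x, t)} \<subseteq> D1 t"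
    proof (intro ballI subsetI)
      fix t x assume tT: "t \<in> T" and "x \<in> {x. 0 \<le> h1 (x, t)}"
      then have h1p: "0 \<le> h1 (x, t)" by simp
      have "0 \<le> 1 / (2 * \<sigma>) * ((zz (x, t) - k (pr (x, t))) \<bullet> (zz (x, t) - k (pr (x, t))))"
        using \<sigma>_pos by simp
      then have "0 \<le> h (fst x, t)" using h1p h1_alt[of "(x, t)"] by (simp add: pr_def)
      then show "x \<in> D1 t" using D_sup[OF tT] by (auto simp: D1_def)
    qed
    show "\<forall>(x, t)\<in>flow_graph T D1. \<exists>v. - \<alpha>1 (h1 (x, t)) < hdot Dh1 (\<lambda>(p, z). (f p + G p *v z, f1 p z)) (\<lambda>(p, z) u. (0, G1 p z *v u)) x t v"
    proof (rule ballI)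
      fix y assume yin: "y \<in> flow_graph T D1"
      obtain x t where y: "y = (x, t)" by fastforce
      obtain p z where x: "x = (p, z)" by fastforce
      have tT: "t \<in> T" and pD: "p \<in> D t" using yin by (auto simp: y x D1_def flow_graph_def)
      define e where "e = z - k (p, t)"
      define A where "A = blinfun_apply (Dh (p, t)) (f p + G p *v z, 1)"
      define d where "d = blinfun_apply (Dk (p, t)) (f p + G p *v z, 1)"
      have hd: "hdot Dh1 (\<lambda>(p, z). (f p + G p *v z, f1 p z)) (\<lambda>(p, z) u. (0, G1 p z *v u)) x t u
          = A - (1/\<sigma>) * ((f1 p z + G1 p z *v u - d) \<bullet> e)" for u
        by (simp add: hdot_def Dh1_app x pr_def zz_def A_def d_def e_def)
      have h1x: "h1 (x, t) = h (p, t) - 1 / (2 * \<sigma>) * (e \<bullet> e)"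
        using h1_alt[of "(x, t)"] by (simp add: x pr_def zz_def e_def)
      have "\<exists>v. - \<alpha>1 (h1 (x, t)) < hdot Dh1 (\<lambda>(p, z). (f p + G p *v z, f1 p z)) (\<lambda>(p, z) u. (0, G1 p z *v u)) x t v"
      proof (cases "e = 0")
        case True
        have "A = hdot Dh f (\<lambda>p z. G p *v z) p t (k (p, t))"
          using True by (simp add: A_def hdot_def e_def)
        also have "\<dots> > - \<alpha> (h (p, t))" using k_safe pD tT by (auto simp: flow_graph_def T_def)
        finally have "A > - \<alpha>1 (h1 (x, t))" using \<alpha>1_ge[rule_format, of "h (p, t)"] h1x True by simp
        then show ?thesis using hd True by auto
      next
        case False
        define M where "M = \<bar>A\<bar> + \<bar>\<alpha>1 (h1 (x, t))\<bar> + 1"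
        have surj: "surj ((*v) (G1 p z))" using G1_rank full_rank_surjective by blast
        then obtain u where u: "G1 p z *v u = d - f1 p z - (\<sigma> * M / (e \<bullet> e)) *\<^sub>R e"
          by (metis surjD)
        have ee: "e \<bullet> e \<noteq> 0" using False by simp
        have "hdot Dh1 (\<lambda>(p, z). (f p + G p *v z, f1 p z)) (\<lambda>(p, z) u. (0, G1 p z *v u)) x t u = A + M"
        proof -
          have "f1 p z + G1 p z *v u - d = - (\<sigma> * M / (e \<bullet> e)) *\<^sub>R e" by (simp add: u)
          then have "hdot Dh1 (\<lambda>(p, z). (f p + G p *v z, f1 p z)) (\<lambda>(p, z) u. (0, G1 p z *v u)) x t u
              = A - (1/\<sigma>) * (- (\<sigma> * M / (e \<bullet> e)) * (e \<bullet> e))" by (simp only: hd inner_scaleR_left)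
          also have "\<dots> = A + M" using ee \<sigma>_pos by (simp add: field_simps)
          finally show ?thesis .
        qed
        then show ?thesis unfolding M_def by (intro exI[of _ u]) linarith
      qed
      then show "case y of (x, t) \<Rightarrow> \<exists>v. - \<alpha>1 (h1 (x, t)) < hdot Dh1 (\<lambda>(p, z). (f p + G p *v z, f1 p z)) (\<lambda>(p, z) u. (0, G1 p z *v u)) x t v"
        by (simp only: y prod.case)
    qed
  qed
  then show ?thesis unfolding cbf_def h1_def by blast
qed

end
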